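(* If $X$ is an (infinite) $T_1$-space, then $|X|\le 2^{nu_s(X)\cdot 2^{s(X)}}$.
   Context: For a space $X$ and $A\subseteq X$, the $\theta$-closure of $A$ is $\mathrm{cl}_\theta(A):=\{y\in X:\ \overline{B}\cap A\neq\emptyset$ for every open neighborhood $B$ of $y\}$. The non-Urysohn number of $X$ with respect to singletons is $nu_s(X):=1+\sup\{|\mathrm{cl}_\theta(\{x\})|:x\in X\}$. $s(X)$ denotes the spread of $X$ (supremum of cardinalities of discrete subspaces, plus $\omega$). Throughout, "space" means infinite topological space. *)

theory Defs
  imports "HOL-Analysis.Analysis" "HOL-Library.Equipollence"
begin

definition theta_closure :: "'a topology \<Rightarrow> 'a set \<Rightarrow> 'a set" where
  "theta_closure X A =
     {y \<in> topspace X. \<forall>B. openin X B \<and> y \<in> B \<longrightarrow> (X closure_of B) \<inter> A \<noteq> {}}"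

text \<open>K (a set of any type) has the cardinality of the supremum of the cardinalities
  of the sets F i, i in I: it is an upper bound, and it is below every upper bound
  (upper bounds taken among sets of the same type as K; this suffices since any
  upper bound of K's type has a subset of exactly the supremum's size).\<close>
definition is_card_sup :: "'i set \<Rightarrow> ('i \<Rightarrow> 'a set) \<Rightarrow> 'b set \<Rightarrow> bool" where
  "is_card_sup I F K \<longleftrightarrow>
     (\<forall>i\<in>I. F i \<lesssim> K) \<and> (\<forall>K'::'b set. (\<forall>i\<in>I. F i \<lesssim> K') \<longrightarrow> K \<lesssim> K')"

text \<open>N has cardinality nu_s(X) = 1 + sup { |cl_theta({x})| : x in X }.\<close>
definition is_nu_s :: "'a topology \<Rightarrow> 'b set \<Rightarrow> bool" where
  "is_nu_s X N \<longleftrightarrow>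
     (\<exists>K::'b set. is_card_sup (topspace X) (\<lambda>x. theta_closure X {x}) K
                 \<and> N \<approx> ({()} <+> K))"

definition discrete_subspace :: "'a topology \<Rightarrow> 'a set \<Rightarrow> bool" where
  "discrete_subspace X D \<longleftrightarrow> D \<subseteq> topspace X \<and> subtopology X D = discrete_topology D"

text \<open>S has cardinality s(X) = sup { |D| : D discrete subspace } + omega.\<close>
definition is_spread :: "'a topology \<Rightarrow> 'b set \<Rightarrow> bool" where
  "is_spread X S \<longleftrightarrow>
     (\<exists>K::'b set. is_card_sup {D. discrete_subspace X D} id K
                 \<and> S \<approx> (K <+> (UNIV :: nat set)))"

end

theory Submission
  imports Defs
begin
unbundle cardinal_syntax

lemma lepoll_iff_ordLeq: "A \<lesssim> B \<longleftrightarrow> |A| \<le>o |B|"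
  by (simp add: lepoll_def card_of_ordLeq[symmetric])

lemma inf_times_self: "infinite A \<Longrightarrow> A \<times> A \<lesssim> A"
  unfolding lepoll_iff_ordLeq by (rule ordIso_imp_ordLeq, rule card_of_Times_same_infinite)

lemma inf_times_lepoll: "infinite T \<Longrightarrow> A \<lesssim> T \<Longrightarrow> B \<lesssim> T \<Longrightarrow> A \<times> B \<lesssim> T"
  by (rule lepoll_trans[OF times_lepoll_mono inf_times_self])

lemma inf_UN_lepoll:
  assumes "infinite T" "I \<lesssim> T" "\<And>i. i \<in> I \<Longrightarrow> A i \<lesssim> T"
  shows "(\<Union>i\<in>I. A i) \<lesssim> T"
proof -
  have "\<forall>i\<in>I. \<exists>f. inj_on f (A i) \<and> f ` A i \<subseteq> T" using assms(3) by (auto simp: lepoll_def)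
  then have "\<exists>f. \<forall>i\<in>I. inj_on (f i) (A i) \<and> f i ` A i \<subseteq> T" by (rule bchoice)
  then obtain f where f: "\<And>i. i\<in>I \<Longrightarrow> inj_on (f i) (A i) \<and> f i ` A i \<subseteq> T" by blast
  define ix where "ix x = (SOME i. i \<in> I \<and> x \<in> A i)" for x
  have ix: "ix x \<in> I \<and> x \<in> A (ix x)" if xin: "x \<in> (\<Union>i\<in>I. A i)" for x
  proof -
    obtain i where "i \<in> I" "x \<in> A i" using xin by blast
    from someI[where P="\<lambda>i. i \<in> I \<and> x \<in> A i", OF conjI[OF this]]
    show ?thesis by (simp add: ix_def)
  qed
  have "inj_on (\<lambda>x. (ix x, f (ix x) x)) (\<Union>i\<in>I. A i)"
  proof (rule inj_onI)
    fix x y assume x: "x \<in> (\<Union>i\<in>I. A i)" and y: "y \<in> (\<Union>i\<in>I. A i)"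
      and e: "(ix x, f (ix x) x) = (ix y, f (ix y) y)"
    then have 1: "ix x = ix y" and 2: "f (ix x) x = f (ix x) y" by auto
    have "inj_on (f (ix x)) (A (ix x))" using f ix[OF x] by blast
    moreover have "x \<in> A (ix x)" "y \<in> A (ix x)" using ix[OF x] ix[OF y] 1 by auto
    ultimately show "x = y" using 2 by (simp add: inj_on_def)
  qed
  moreover have "(\<lambda>x. (ix x, f (ix x) x)) ` (\<Union>i\<in>I. A i) \<subseteq> I \<times> T" using ix f by blast
  ultimately have "(\<Union>i\<in>I. A i) \<lesssim> I \<times> T" by (auto simp: lepoll_def)
  also have "I \<times> T \<lesssim> T" using assms inf_times_lepoll by blast
  finally show ?thesis .
qed

lemma inf_un_lepoll: assumes "infinite T" "A \<lesssim> T" "B \<lesssim> T" shows "A \<union> B \<lesssim> T"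
proof -
  have "{A, B} \<lesssim> T" by (rule finite_lepoll_infinite) (use assms(1) in auto)
  then have "(\<Union>i\<in>{A,B}. i) \<lesssim> T" by (rule inf_UN_lepoll[OF assms(1)]) (use assms in auto)
  then show ?thesis by simp
qed


lemma discrete_of_isolating:
  assumes "D \<subseteq> topspace X" "\<And>a. a \<in> D \<Longrightarrow> \<exists>V. openin X V \<and> V \<inter> D = {a}"
  shows "discrete_subspace X D"
proof -
  have "discrete_topology D = subtopology X D"
    unfolding discrete_topology_unique
  proof
    show "topspace (subtopology X D) = D" using assms(1) by auto
    show "\<forall>x\<in>D. openin (subtopology X D) {x}"
    proof
      fix x assume x: "x \<in> D"
      then obtain V where "openin X V" "V \<inter> D = {x}" using assms(2) by blast
      then show "openin (subtopology X D) {x}" unfolding openin_subtopology by blast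
    qed
  qed
  thus ?thesis using assms by (simp add: discrete_subspace_def)
qed

lemma sapirovskii:
  assumes Y: "Y \<subseteq> topspace X" and U: "\<And>y. y \<in> Y \<Longrightarrow> openin X (U y) \<and> y \<in> U y"
  shows "\<exists>A \<subseteq> Y. discrete_subspace X A \<and> Y \<subseteq> X closure_of A \<union> (\<Union>a\<in>A. U a)"
proof -
  obtain R :: "'a rel" where R0: "Well_order R \<and> Field R = UNIV" using well_ordering by (rule exE)
  note R = conjunct1[OF R0] conjunct2[OF R0]
  let ?R = "R - Id"
  have wf: "wf ?R" using R(1) by (simp add: wo_rel.WF wo_rel_def)
  have tot: "(a,b) \<in> ?R \<or> (b,a) \<in> ?R" if "a \<noteq> b" for a b
    using R that unfolding well_order_on_def linear_order_on_def total_on_def by auto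
  define F where "F = (\<lambda>f a. a \<in> Y \<and> a \<notin> X closure_of {b. (b,a) \<in> ?R \<and> f b}
        \<and> (\<forall>b. (b,a) \<in> ?R \<and> f b \<longrightarrow> a \<notin> U b))"
  define c where "c = wfrec ?R F"
  have c: "c a = (a \<in> Y \<and> a \<notin> X closure_of {b. (b,a) \<in> ?R \<and> c b}
        \<and> (\<forall>b. (b,a) \<in> ?R \<and> c b \<longrightarrow> a \<notin> U b))" for a
  proof -
    have "c a = F (cut c ?R a) a" unfolding c_def by (rule wfrec[OF wf])
    moreover have "{b. (b,a) \<in> ?R \<and> cut c ?R a b} = {b. (b,a) \<in> ?R \<and> c b}"
      by (auto simp: cut_def)
    moreover have "(\<forall>b. (b,a) \<in> ?R \<and> cut c ?R a b \<longrightarrow> a \<notin> U b) = (\<forall>b. (b,a) \<in> ?R \<and> c b \<longrightarrow> a \<notin> U b)"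
      by (auto simp: cut_def)
    ultimately show ?thesis unfolding F_def by simp
  qed
  define A where "A = {a. c a}"
  have cE: "a \<in> Y \<and> a \<notin> X closure_of {b. (b,a) \<in> ?R \<and> c b}
        \<and> (\<forall>b. (b,a) \<in> ?R \<and> c b \<longrightarrow> a \<notin> U b)" if "c a" for a
    using c[of a] that by blast
  have AY: "A \<subseteq> Y" using cE by (auto simp: A_def)
  have disc: "discrete_subspace X A"
  proof (rule discrete_of_isolating)
    show "A \<subseteq> topspace X" using AY Y by auto
    fix a assume a: "a \<in> A"
    then have ca: "a \<in> Y" "a \<notin> X closure_of {b. (b,a) \<in> ?R \<and> c b}"
      "\<And>b. (b,a) \<in> ?R \<Longrightarrow> c b \<Longrightarrow> a \<notin> U b"
      using c[of a] by (auto simp: A_def)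
    from ca(2) obtain W where W: "openin X W" "a \<in> W" "\<And>b. (b,a) \<in> ?R \<Longrightarrow> c b \<Longrightarrow> b \<notin> W"
      using ca(1) Y unfolding in_closure_of by blast
    have "W \<inter> U a \<inter> A = {a}"
    proof
      show "{a} \<subseteq> W \<inter> U a \<inter> A" using W U ca a by auto
      show "W \<inter> U a \<inter> A \<subseteq> {a}"
      proof
        fix b assume b: "b \<in> W \<inter> U a \<inter> A"
        show "b \<in> {a}"
        proof (rule ccontr)
          assume "b \<notin> {a}" then have "b \<noteq> a" by auto
          then consider "(b,a) \<in> ?R" | "(a,b) \<in> ?R" using tot by blast
          then show False
          proof cases
            case 1 thus False using W b by (auto simp: A_def)
          next
            case 2 have "b \<notin> U a" using c[of b] b a 2 by (auto simp: A_def)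
            thus False using b by auto
          qed
        qed
      qed
    qed
    moreover have "openin X (W \<inter> U a)" using W U ca by auto
    ultimately show "\<exists>V. openin X V \<and> V \<inter> A = {a}" by blast
  qed
  have cover: "Y \<subseteq> X closure_of A \<union> (\<Union>a\<in>A. U a)"
  proof
    fix y assume y: "y \<in> Y"
    show "y \<in> X closure_of A \<union> (\<Union>a\<in>A. U a)"
    proof (cases "y \<in> A")
      case True then show ?thesis using y Y AY closure_of_subset[of A X] by auto
    next
      case False
      then have "\<not> c y" by (simp add: A_def)
      then have "y \<in> X closure_of {b. (b,y) \<in> ?R \<and> c b} \<or> (\<exists>b. (b,y) \<in> ?R \<and> c b \<and> y \<in> U b)"
        using c[of y] y by auto
      moreover have "X closure_of {b. (b,y) \<in> ?R \<and> c b} \<subseteq> X closure_of A"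
        by (rule closure_of_mono) (auto simp: A_def)
      ultimately show ?thesis by (auto simp: A_def)
    qed
  qed
  show ?thesis using AY disc cover by blast
qed


lemma trace_key:
  assumes x: "x \<in> X closure_of A" and y: "y \<in> X closure_of A"
    and eq: "{U \<inter> A | U. openin X U \<and> x \<in> U} = {U \<inter> A | U. openin X U \<and> y \<in> U}"
  shows "y \<in> theta_closure X {x}"
proof -
  have yX: "y \<in> topspace X" using subsetD[OF closure_of_subset_topspace y] .
  have xX: "x \<in> topspace X" using subsetD[OF closure_of_subset_topspace x] .
  have "X closure_of B \<inter> {x} \<noteq> {}" if B: "openin X B" "y \<in> B" for B
  proof -
    have "x \<in> X closure_of B"
      unfolding in_closure_of
    proof (intro conjI allI impI)
      show "x \<in> topspace X" by (rule xX)
      fix U assume U: "x \<in> U \<and> openin X U"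
      then have "U \<inter> A \<in> {U \<inter> A | U. openin X U \<and> x \<in> U}" by blast
      then have "U \<inter> A \<in> {U \<inter> A | U. openin X U \<and> y \<in> U}" using eq by simp
      then obtain V where V: "openin X V" "y \<in> V" "U \<inter> A = V \<inter> A" by blast
      have "openin X (B \<inter> V)" "y \<in> B \<inter> V" using B V by auto
      then obtain a where "a \<in> A" "a \<in> B \<inter> V" using y unfolding in_closure_of by blast
      then show "\<exists>z. z \<in> B \<and> z \<in> U" using V(3) by blast
    qed
    thus ?thesis by blast
  qed
  thus ?thesis using yX unfolding theta_closure_def by blast
qed

lemma closure_lepoll:
  assumes th: "\<And>x. x \<in> topspace X \<Longrightarrow> theta_closure X {x} \<lesssim> N"
  shows "X closure_of A \<lesssim> Pow (Pow A) \<times> N"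
proof -
  define tr where "tr x = {U \<inter> A | U. openin X U \<and> x \<in> U}" for x
  define C where "C = X closure_of A"
  define rep where "rep P = (SOME x. x \<in> C \<and> tr x = P)" for P
  have rep: "rep (tr x) \<in> C \<and> tr (rep (tr x)) = tr x" if "x \<in> C" for x
    using someI[where P="\<lambda>y. y \<in> C \<and> tr y = tr x", OF conjI[OF that refl]]
    by (simp add: rep_def)
  have inth: "x \<in> theta_closure X {rep (tr x)}" if "x \<in> C" for x
    using trace_key[of "rep (tr x)" X A x] rep[OF that] that by (simp add: C_def tr_def)
  have CX: "C \<subseteq> topspace X" by (simp add: C_def closure_of_subset_topspace)
  have "\<forall>z\<in>C. \<exists>g. inj_on g (theta_closure X {z}) \<and> g ` theta_closure X {z} \<subseteq> N"
    using th CX by (auto simp: lepoll_def)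
  then have "\<exists>g. \<forall>z\<in>C. inj_on (g z) (theta_closure X {z}) \<and> g z ` theta_closure X {z} \<subseteq> N"
    by (rule bchoice)
  then obtain g where g: "\<And>z. z \<in> C \<Longrightarrow> inj_on (g z) (theta_closure X {z}) \<and> g z ` theta_closure X {z} \<subseteq> N"
    by blast
  define h where "h x = (tr x, g (rep (tr x)) x)" for x
  have "inj_on h C"
  proof (rule inj_onI)
    fix x y assume x: "x \<in> C" and y: "y \<in> C" and e: "h x = h y"
    then have 1: "tr x = tr y" and 2: "g (rep (tr x)) x = g (rep (tr x)) y" by (auto simp: h_def)
    have "inj_on (g (rep (tr x))) (theta_closure X {rep (tr x)})" using g rep[OF x] by blast
    moreover have "x \<in> theta_closure X {rep (tr x)}" "y \<in> theta_closure X {rep (tr x)}"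
      using inth[OF x] inth[OF y] 1 by auto
    ultimately show "x = y" using 2 by (simp add: inj_on_def)
  qed
  moreover have "h ` C \<subseteq> Pow (Pow A) \<times> N"
  proof
    fix u assume "u \<in> h ` C"
    then obtain x where x: "x \<in> C" "u = h x" by blast
    have "tr x \<in> Pow (Pow A)" by (auto simp: tr_def)
    moreover have "g (rep (tr x)) x \<in> N" using g[of "rep (tr x)"] rep[OF x(1)] inth[OF x(1)] by blast
    ultimately show "u \<in> Pow (Pow A) \<times> N" using x by (simp add: h_def)
  qed
  ultimately show ?thesis unfolding C_def lepoll_def by blast
qed


lemma E_step:
  assumes sp: "\<And>D. discrete_subspace X D \<Longrightarrow> D \<lesssim> S" and y: "y \<in> topspace X"
  shows "\<exists>A Ob. A \<subseteq> topspace X \<and> A \<lesssim> S \<and> (\<forall>a\<in>A. openin X (Ob a) \<and> y \<in> Ob a) \<and>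
           (\<forall>p\<in>topspace X. p \<notin> theta_closure X {y} \<and> p \<notin> X closure_of A \<longrightarrow> (\<exists>a\<in>A. p \<notin> Ob a))"
proof -
  let ?Y = "topspace X - theta_closure X {y}"
  have "\<forall>z\<in>?Y. \<exists>B. openin X B \<and> z \<in> B \<and> y \<notin> X closure_of B"
    unfolding theta_closure_def by blast
  then have "\<exists>B. \<forall>z\<in>?Y. openin X (B z) \<and> z \<in> B z \<and> y \<notin> X closure_of (B z)"
    by (rule bchoice)
  then obtain B where B: "\<And>z. z \<in> ?Y \<Longrightarrow> openin X (B z) \<and> z \<in> B z \<and> y \<notin> X closure_of (B z)"
    by blast
  obtain A where A: "A \<subseteq> ?Y" "discrete_subspace X A" "?Y \<subseteq> X closure_of A \<union> (\<Union>a\<in>A. B a)"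
    using sapirovskii[of ?Y X B] B by blast
  define Ob where "Ob a = topspace X - X closure_of (B a)" for a
  show ?thesis
  proof (intro exI conjI ballI impI)
    show "A \<subseteq> topspace X" using A by auto
    show "A \<lesssim> S" using sp A by auto
    fix a assume a: "a \<in> A"
    show "openin X (Ob a)" unfolding Ob_def by (simp add: openin_diff)
    show "y \<in> Ob a" using B a A y by (auto simp: Ob_def)
  next
    fix p assume p: "p \<in> topspace X" "p \<notin> theta_closure X {y} \<and> p \<notin> X closure_of A"
    then obtain a where a: "a \<in> A" "p \<in> B a" using A(3) by blast
    then have "p \<in> X closure_of (B a)" using closure_of_subset[of "B a" X] B[of a] A openin_subset by blast
    then show "\<exists>a\<in>A. p \<notin> Ob a" using a by (auto simp: Ob_def)
  qed
qed


lemma Pow_lepoll_mono: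
  assumes "A \<lesssim> B" shows "Pow A \<lesssim> Pow B"
proof -
  obtain f where f: "inj_on f A" "f ` A \<subseteq> B" using assms by (auto simp: lepoll_def)
  have "inj_on (\<lambda>P. f ` P) (Pow A)"
    by (rule inj_onI) (use f(1) in \<open>auto simp: inj_on_image_eq_iff\<close>)
  moreover have "(\<lambda>P. f ` P) ` Pow A \<subseteq> Pow B" using f(2) by auto
  ultimately show ?thesis by (auto simp: lepoll_def)
qed

lemma count_small:
  fixes Q :: "'q set" and S :: "'s set" and Z :: "'z set"
  assumes Zinf: "infinite Z" and SZ: "S \<lesssim> Z" and QZ: "Q \<lesssim> Pow Z"
  shows "{B. B \<subseteq> Q \<and> B \<lesssim> S} \<lesssim> Pow Z"
proof -
  obtain h where h: "inj_on h Q" "h ` Q \<subseteq> Pow Z" using QZ by (auto simp: lepoll_def)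
  define e where "e B = (SOME e. inj_on e B \<and> e ` B \<subseteq> S)" for B :: "'q set"
  have e: "inj_on (e B) B \<and> e B ` B \<subseteq> S" if BS: "B \<lesssim> S" for B
  proof -
    obtain g where "inj_on g B \<and> g ` B \<subseteq> S" using BS by (auto simp: lepoll_def)
    from someI[where P="\<lambda>e. inj_on e B \<and> e ` B \<subseteq> S", OF this]
    show ?thesis by (simp add: e_def)
  qed
  define Z' where "Z' = insert None (Some ` Z)"
  define E where "E B = {(e B b, None) | b. b \<in> B} \<union> {(e B b, Some z) | b z. b \<in> B \<and> z \<in> h b}" for B :: "'q set"
  define D where "D F = {b \<in> Q. \<exists>s. (s, None) \<in> F \<and> h b = {z. (s, Some z) \<in> F}}" for F :: "('s \<times> 'z option) set"
  have DE: "D (E B) = B" if B: "B \<subseteq> Q" "B \<lesssim> S" for B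
  proof
    have inj: "inj_on (e B) B" using e[OF B(2)] by blast
    have key: "{z. (e B b, Some z) \<in> E B} = h b" if b: "b \<in> B" for b
    proof -
      have "(e B b, Some z) \<in> E B \<longleftrightarrow> z \<in> h b" for z
      proof
        assume "(e B b, Some z) \<in> E B"
        then obtain b' where "b' \<in> B" "e B b' = e B b" "z \<in> h b'" by (auto simp: E_def)
        then show "z \<in> h b" using inj b by (metis inj_onD)
      qed (use b in \<open>auto simp: E_def\<close>)
      then show ?thesis by blast
    qed
    show "B \<subseteq> D (E B)"
    proof
      fix b assume b: "b \<in> B"
      have "(e B b, None) \<in> E B" using b by (auto simp: E_def)
      then show "b \<in> D (E B)" using key[OF b] b B(1) by (auto simp: D_def)
    qed
    show "D (E B) \<subseteq> B"
    proof
      fix b assume "b \<in> D (E B)"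
      then obtain s where b: "b \<in> Q" "(s, None) \<in> E B" "h b = {z. (s, Some z) \<in> E B}"
        by (auto simp: D_def)
      then obtain b' where b': "b' \<in> B" "s = e B b'" by (auto simp: E_def)
      then have "h b = h b'" using b key by simp
      then show "b \<in> B" using h(1) b b' B(1) by (metis inj_onD subsetD)
    qed
  qed
  have "inj_on E {B. B \<subseteq> Q \<and> B \<lesssim> S}"
    by (rule inj_onI) (metis (no_types, lifting) DE mem_Collect_eq)
  moreover have "E ` {B. B \<subseteq> Q \<and> B \<lesssim> S} \<subseteq> Pow (S \<times> Z')"
  proof
    fix F assume "F \<in> E ` {B. B \<subseteq> Q \<and> B \<lesssim> S}"
    then obtain B where B: "B \<subseteq> Q" "B \<lesssim> S" "F = E B" by blast
    have "e B ` B \<subseteq> S" using e[OF B(2)] by blast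
    moreover have "h b \<subseteq> Z" if "b \<in> B" for b using h(2) B(1) that by blast
    ultimately show "F \<in> Pow (S \<times> Z')" using B(3) by (auto simp: E_def Z'_def)
  qed
  ultimately have 1: "{B. B \<subseteq> Q \<and> B \<lesssim> S} \<lesssim> Pow (S \<times> Z')" by (auto simp: lepoll_def)
  have "Some ` Z \<approx> Z" by (rule inj_on_image_eqpoll_self) simp
  moreover have "infinite (Some ` Z)" using Zinf by (simp add: finite_image_iff)
  moreover note infinite_insert_eqpoll[OF calculation(2), of None]
  ultimately have "Z' \<approx> Z" unfolding Z'_def by (meson eqpoll_trans)
  then have "S \<times> Z' \<lesssim> Z \<times> Z" using SZ by (simp add: eqpoll_imp_lepoll times_lepoll_mono)
  also have "Z \<times> Z \<lesssim> Z" using Zinf by (rule inf_times_self)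
  finally have "Pow (S \<times> Z') \<lesssim> Pow Z" by (rule Pow_lepoll_mono)
  with 1 show ?thesis by (rule lepoll_trans)
qed

lemma card_setup:
  assumes Sinf: "infinite S" and Nne: "N \<noteq> {}"
  shows "infinite (N \<times> Pow S)" "infinite (Pow (N \<times> Pow S))"
    "S \<lesssim> N \<times> Pow S" "S \<lesssim> Pow (N \<times> Pow S)" "N \<lesssim> Pow (N \<times> Pow S)"
    "Pow S \<lesssim> Pow (N \<times> Pow S)" "Pow (Pow S) \<times> N \<lesssim> Pow (N \<times> Pow S)"
proof -
  obtain n where n: "n \<in> N" using Nne by blast
  have PZ: "Pow S \<lesssim> N \<times> Pow S"
    unfolding lepoll_def by (rule exI[of _ "\<lambda>P. (n, P)"]) (auto simp: inj_on_def n)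
  have NZ: "N \<lesssim> N \<times> Pow S"
    unfolding lepoll_def by (rule exI[of _ "\<lambda>m. (m, {})"]) (auto simp: inj_on_def)
  have SP: "S \<lesssim> Pow S" by (rule lepoll_Pow_self)
  show SZ: "S \<lesssim> N \<times> Pow S" using SP PZ by (rule lepoll_trans)
  show Zinf: "infinite (N \<times> Pow S)"
    using Sinf SZ by (meson infinite_le_lepoll lepoll_trans)
  have ZT: "N \<times> Pow S \<lesssim> Pow (N \<times> Pow S)" by (rule lepoll_Pow_self)
  show Tinf: "infinite (Pow (N \<times> Pow S))"
    using Zinf ZT by (meson infinite_le_lepoll lepoll_trans)
  show "S \<lesssim> Pow (N \<times> Pow S)" using SZ ZT by (rule lepoll_trans)
  show NT: "N \<lesssim> Pow (N \<times> Pow S)" using NZ ZT by (rule lepoll_trans)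
  show "Pow S \<lesssim> Pow (N \<times> Pow S)" using PZ ZT by (rule lepoll_trans)
  have "Pow (Pow S) \<lesssim> Pow (N \<times> Pow S)" using PZ by (rule Pow_lepoll_mono)
  then show "Pow (Pow S) \<times> N \<lesssim> Pow (N \<times> Pow S)" using NT Tinf inf_times_lepoll by blast
qed


lemma main_bound:
  fixes X :: "'a topology" and N :: "'b set" and S :: "'c set"
  assumes th: "\<And>x. x \<in> topspace X \<Longrightarrow> theta_closure X {x} \<lesssim> N"
    and sp: "\<And>D. discrete_subspace X D \<Longrightarrow> D \<lesssim> S"
    and Sinf: "infinite S" and Nne: "N \<noteq> {}"
  shows "topspace X \<lesssim> Pow (N \<times> Pow S)"
proof -
  define T where "T = Pow (N \<times> Pow S)"
  define tX where "tX = topspace X"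
  note cs = card_setup[OF Sinf Nne]
  have Tinf: "infinite T" using cs by (simp add: T_def)
  have ST: "S \<lesssim> T" using cs by (simp add: T_def)
  have NT: "N \<lesssim> T" using cs by (simp add: T_def)
  have clT: "X closure_of A \<lesssim> T" if "A \<lesssim> S" for A
  proof -
    have "X closure_of A \<lesssim> Pow (Pow A) \<times> N" using closure_lepoll th by blast
    also have "Pow (Pow A) \<times> N \<lesssim> Pow (Pow S) \<times> N"
      using that by (intro times_lepoll_mono Pow_lepoll_mono) auto
    also have "\<dots> \<lesssim> T" using cs by (simp add: T_def)
    finally show ?thesis .
  qed
  have count: "{B. B \<subseteq> Q \<and> B \<lesssim> S} \<lesssim> T" if "Q \<lesssim> T" for Q :: "'q set"
    unfolding T_def by (rule count_small) (use cs that in \<open>auto simp: T_def\<close>)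
  have "\<forall>y\<in>tX. \<exists>A Ob. A \<subseteq> topspace X \<and> A \<lesssim> S \<and> (\<forall>a\<in>A. openin X (Ob a) \<and> y \<in> Ob a) \<and>
           (\<forall>p\<in>topspace X. p \<notin> theta_closure X {y} \<and> p \<notin> X closure_of A \<longrightarrow> (\<exists>a\<in>A. p \<notin> Ob a))"
    using E_step[OF sp] by (simp add: tX_def)
  then have "\<forall>y\<in>tX. \<exists>AO. fst AO \<subseteq> topspace X \<and> fst AO \<lesssim> S \<and> (\<forall>a\<in>fst AO. openin X (snd AO a) \<and> y \<in> snd AO a) \<and>
           (\<forall>p\<in>topspace X. p \<notin> theta_closure X {y} \<and> p \<notin> X closure_of (fst AO) \<longrightarrow> (\<exists>a\<in>fst AO. p \<notin> snd AO a))"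
    by simp
  then have "\<exists>F. \<forall>y\<in>tX. fst (F y) \<subseteq> topspace X \<and> fst (F y) \<lesssim> S \<and> (\<forall>a\<in>fst (F y). openin X (snd (F y) a) \<and> y \<in> snd (F y) a) \<and>
           (\<forall>p\<in>topspace X. p \<notin> theta_closure X {y} \<and> p \<notin> X closure_of (fst (F y)) \<longrightarrow> (\<exists>a\<in>fst (F y). p \<notin> snd (F y) a))"
    by (rule bchoice)
  then obtain F where F: "\<forall>y\<in>tX. fst (F y) \<subseteq> topspace X \<and> fst (F y) \<lesssim> S \<and> (\<forall>a\<in>fst (F y). openin X (snd (F y) a) \<and> y \<in> snd (F y) a) \<and>
           (\<forall>p\<in>topspace X. p \<notin> theta_closure X {y} \<and> p \<notin> X closure_of (fst (F y)) \<longrightarrow> (\<exists>a\<in>fst (F y). p \<notin> snd (F y) a))"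
    by blast
  define Ay where "Ay y = fst (F y)" for y
  define Ob where "Ob y = snd (F y)" for y
  have Ay_sub: "Ay y \<subseteq> tX" and Ay_S: "Ay y \<lesssim> S" if "y \<in> tX" for y
    using F that by (auto simp: Ay_def tX_def)
  have Ob_open: "openin X (Ob y a)" and Ob_in: "y \<in> Ob y a" if "y \<in> tX" "a \<in> Ay y" for y a
    using F that by (auto simp: Ay_def Ob_def)
  have Ob_sep: "\<exists>a\<in>Ay y. p \<notin> Ob y a"
    if "y \<in> tX" "p \<in> tX" "p \<notin> theta_closure X {y}" "p \<notin> X closure_of (Ay y)" for y p
    using F that by (auto simp: Ay_def Ob_def tX_def)
  define Qall where "Qall M = {(y,a). y \<in> M \<and> y \<in> tX \<and> a \<in> Ay y}" for M
  define cov where "cov B = X closure_of (fst ` B) \<union> (\<Union>ya\<in>B. Ob (fst ya) (snd ya))" for B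
  define wit where "wit B = (SOME p. p \<in> tX \<and> p \<notin> cov B)" for B
  have wit: "wit B \<in> tX \<and> wit B \<notin> cov B" if nc0: "\<not> tX \<subseteq> cov B" for B
  proof -
    obtain p where "p \<in> tX \<and> p \<notin> cov B" using nc0 by blast
    from someI[where P="\<lambda>p. p \<in> tX \<and> p \<notin> cov B", OF this] show ?thesis by (simp add: wit_def)
  qed
  define G where "G M = (M \<inter> tX) \<union> (\<Union>y\<in>M \<inter> tX. theta_closure X {y} \<union> Ay y)
     \<union> (\<Union>A\<in>{A. A \<subseteq> M \<inter> tX \<and> A \<lesssim> S}. X closure_of A)
     \<union> wit ` {B. B \<subseteq> Qall M \<and> B \<lesssim> S \<and> \<not> tX \<subseteq> cov B}" for M
  have thX: "theta_closure X {y} \<subseteq> tX" for y by (auto simp: theta_closure_def tX_def)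
  have clX: "X closure_of A \<subseteq> tX" for A unfolding tX_def by (rule closure_of_subset_topspace)
  have G_sub: "G M \<subseteq> tX" for M
  proof -
    have "wit ` {B. B \<subseteq> Qall M \<and> B \<lesssim> S \<and> \<not> tX \<subseteq> cov B} \<subseteq> tX" using wit by blast
    moreover have "(\<Union>A\<in>{A. A \<subseteq> M \<inter> tX \<and> A \<lesssim> S}. X closure_of A) \<subseteq> tX" using clX by blast
    moreover have "(\<Union>y\<in>M \<inter> tX. theta_closure X {y} \<union> Ay y) \<subseteq> tX" using thX Ay_sub by blast
    ultimately show ?thesis unfolding G_def by blast
  qed
  have G_infl: "M \<subseteq> G M" if "M \<subseteq> tX" for M using that unfolding G_def by blast
  have G_size: "G M \<lesssim> T" if MT: "M \<lesssim> T" for M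
  proof -
    have M': "M \<inter> tX \<lesssim> T" using MT by (meson inf_le1 lepoll_trans subset_imp_lepoll)
    have 2: "(\<Union>y\<in>M \<inter> tX. theta_closure X {y} \<union> Ay y) \<lesssim> T"
    proof (rule inf_UN_lepoll[OF Tinf M'])
      fix y assume y: "y \<in> M \<inter> tX"
      have "theta_closure X {y} \<lesssim> T" using th[of y] y NT lepoll_trans by (auto simp: tX_def)
      moreover have "Ay y \<lesssim> T" using Ay_S[of y] y ST lepoll_trans by blast
      ultimately show "theta_closure X {y} \<union> Ay y \<lesssim> T" using Tinf by (rule inf_un_lepoll[rotated])
    qed
    have 3: "(\<Union>A\<in>{A. A \<subseteq> M \<inter> tX \<and> A \<lesssim> S}. X closure_of A) \<lesssim> T"
      by (rule inf_UN_lepoll[OF Tinf count[OF M']]) (use clT in blast)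
    have QT: "Qall M \<lesssim> T"
    proof -
      have "Qall M \<subseteq> (\<Union>y\<in>M \<inter> tX. {y} \<times> Ay y)" by (auto simp: Qall_def)
      moreover have "(\<Union>y\<in>M \<inter> tX. {y} \<times> Ay y) \<lesssim> T"
      proof (rule inf_UN_lepoll[OF Tinf M'])
        fix y assume y: "y \<in> M \<inter> tX"
        have "{y} \<times> Ay y \<approx> Ay y" by (rule times_singleton_eqpoll)
        also have "Ay y \<lesssim> S" using Ay_S y by blast
        also have "S \<lesssim> T" by (rule ST)
        finally show "{y} \<times> Ay y \<lesssim> T" .
      qed
      ultimately show ?thesis by (meson lepoll_trans subset_imp_lepoll)
    qed
    have 4: "wit ` {B. B \<subseteq> Qall M \<and> B \<lesssim> S \<and> \<not> tX \<subseteq> cov B} \<lesssim> T"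
    proof -
      have "wit ` {B. B \<subseteq> Qall M \<and> B \<lesssim> S \<and> \<not> tX \<subseteq> cov B} \<lesssim> {B. B \<subseteq> Qall M \<and> B \<lesssim> S \<and> \<not> tX \<subseteq> cov B}"
        by (rule image_lepoll)
      also have "\<dots> \<lesssim> {B. B \<subseteq> Qall M \<and> B \<lesssim> S}" by (rule subset_imp_lepoll) blast
      also have "\<dots> \<lesssim> T" by (rule count[OF QT])
      finally show ?thesis .
    qed
    show ?thesis unfolding G_def
      by (intro inf_un_lepoll[OF Tinf] M' 2 3 4)
  qed
  define W where "W = cardSuc |S|"
  have CS: "Card_order |S|" by (rule card_of_Card_order)
  have CW: "Card_order W" unfolding W_def by (rule cardSuc_Card_order[OF CS])
  have WW: "Well_order W" using CW by (simp add: card_order_on_def)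
  let ?R = "W - Id"
  have wf: "wf ?R" using WW by (simp add: wo_rel.WF wo_rel_def)
  define Mc where "Mc = wfrec ?R (\<lambda>f i. G (\<Union>j\<in>{j. (j,i) \<in> ?R}. f j))"
  have Mc: "Mc i = G (\<Union>j\<in>{j. (j,i) \<in> ?R}. Mc j)" for i
  proof -
    have "Mc i = G (\<Union>j\<in>{j. (j,i) \<in> ?R}. cut Mc ?R i j)" unfolding Mc_def by (subst wfrec[OF wf]) simp
    also have "(\<Union>j\<in>{j. (j,i) \<in> ?R}. cut Mc ?R i j) = (\<Union>j\<in>{j. (j,i) \<in> ?R}. Mc j)"
      by (rule SUP_cong) (auto simp: cut_apply)
    finally show ?thesis .
  qed
  have Mc_sub: "Mc i \<subseteq> tX" for i by (subst Mc) (rule G_sub)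
  have Mc_chain: "Mc j \<subseteq> Mc i" if "(j,i) \<in> ?R" for i j
  proof -
    have "Mc j \<subseteq> (\<Union>j\<in>{j. (j,i) \<in> ?R}. Mc j)" using that by blast
    also have "\<dots> \<subseteq> G (\<Union>j\<in>{j. (j,i) \<in> ?R}. Mc j)" by (rule G_infl) (use Mc_sub in blast)
    finally show ?thesis by (subst Mc)
  qed
  have chain: "relChain W Mc" unfolding relChain_def
  proof (intro allI impI)
    fix i j assume "(i,j) \<in> W"
    then show "Mc i \<subseteq> Mc j" using Mc_chain[of i j] by (cases "i = j") auto
  qed
  have under_S: "{j. (j,i) \<in> ?R} \<lesssim> S" for i
  proof (cases "i \<in> Field W")
    case True
    have "|underS W i| <o W" by (rule card_of_underS[OF CW True])
    then have "|underS W i| \<le>o |S|"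
      unfolding W_def using cardSuc_ordLeq_ordLess[OF CS card_of_Card_order] by blast
    moreover have "{j. (j,i) \<in> ?R} = underS W i" by (auto simp: underS_def)
    ultimately show ?thesis by (simp add: lepoll_iff_ordLeq)
  next
    case False
    then have e: "{j. (j,i) \<in> ?R} = {}" by (auto intro: FieldI2)
    show ?thesis unfolding e by (rule empty_lepoll)
  qed
  have Mc_size: "Mc i \<lesssim> T" for i
  proof (induction i rule: wf_induct_rule[OF wf])
    case (1 i)
    have "(\<Union>j\<in>{j. (j,i) \<in> ?R}. Mc j) \<lesssim> T"
      by (rule inf_UN_lepoll[OF Tinf lepoll_trans[OF under_S ST]]) (use 1 in blast)
    then show ?case by (subst Mc) (rule G_size)
  qed
  define Mall where "Mall = (\<Union>i\<in>Field W. Mc i)"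
  have Mall_sub: "Mall \<subseteq> tX" using Mc_sub by (auto simp: Mall_def)
  have FW_T: "Field W \<lesssim> T"
  proof -
    have "|Field W| =o W" by (rule card_of_Field_ordIso[OF CW])
    moreover have "W \<le>o |Pow S|" unfolding W_def
      using cardSuc_ordLess_ordLeq[OF CS card_of_Card_order] card_of_Pow by blast
    ultimately have "|Field W| \<le>o |Pow S|" by (rule ordIso_ordLeq_trans)
    then have "Field W \<lesssim> Pow S" by (simp add: lepoll_iff_ordLeq)
    then show ?thesis using cs lepoll_trans by (auto simp: T_def)
  qed
  have Mall_T: "Mall \<lesssim> T" unfolding Mall_def
    by (rule inf_UN_lepoll[OF Tinf FW_T]) (rule Mc_size)
  have FWinf: "\<not> finite (Field W)"
  proof -
    have "|S| \<le>o W" unfolding W_def by (rule cardSuc_ordLeq[OF CS])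
    then have "|S| \<le>o |Field W|" using card_of_Field_ordIso[OF CW] ordIso_symmetric ordLeq_ordIso_trans by blast
    then show ?thesis using Sinf card_of_ordLeq_infinite by blast
  qed
  have stage: "\<exists>P. B \<subseteq> P \<and> P \<subseteq> tX \<and> G P \<subseteq> Mall" if B: "B \<subseteq> Mall" "B \<lesssim> S" for B
  proof -
    have "|B| \<le>o |S|" using B(2) by (simp add: lepoll_iff_ordLeq)
    then obtain i where i: "i \<in> Field W" "B \<subseteq> Mc i"
      using cardSuc_UNION[OF CS _ chain[unfolded W_def], of B] B(1) Sinf
      unfolding Mall_def W_def by (auto simp: Field_card_of)
    have "\<not> (\<exists>a. Field W = under W a)" by (rule Card_order_infinite_not_under[OF CW FWinf])
    then have "Field W \<noteq> under W i" by blast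
    moreover have "under W i \<subseteq> Field W" by (auto simp: under_def Field_def)
    ultimately obtain j where j: "j \<in> Field W" "j \<notin> under W i" by blast
    then have ji: "(j,i) \<notin> W" by (simp add: under_def)
    have "Refl W" using WW by (simp add: order_on_defs)
    then have "(i,i) \<in> W" using i(1) by (simp add: refl_on_def Field_def)
    then have "i \<noteq> j" using ji by auto
    moreover have "total_on (Field W) W" using WW by (simp add: order_on_defs)
    ultimately have "(i,j) \<in> W" using ji i(1) j(1) unfolding total_on_def by blast
    then have ijR: "(i,j) \<in> ?R" using \<open>i \<noteq> j\<close> by simp
    define P where "P = (\<Union>k\<in>{k. (k,j) \<in> ?R}. Mc k)"
    have "B \<subseteq> P" using i(2) ijR by (auto simp: P_def)
    moreover have "P \<subseteq> tX" using Mc_sub by (auto simp: P_def)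
    moreover have "G P \<subseteq> Mall" using Mc[of j] j(1) by (auto simp: P_def Mall_def)
    ultimately show ?thesis by blast
  qed
  have single: "{y} \<lesssim> S" for y by (rule finite_lepoll_infinite[OF Sinf]) simp
  have R1: "theta_closure X {y} \<union> Ay y \<subseteq> Mall" if y: "y \<in> Mall" for y
  proof -
    have ys: "{y} \<subseteq> Mall" using y by simp
    obtain P where P: "{y} \<subseteq> P" "P \<subseteq> tX" "G P \<subseteq> Mall" using stage[OF ys single[of y]] by blast
    then have "y \<in> P \<inter> tX" by auto
    then have "theta_closure X {y} \<union> Ay y \<subseteq> G P" unfolding G_def by blast
    then show ?thesis using P by blast
  qed
  have R2: "X closure_of A \<subseteq> Mall" if A: "A \<subseteq> Mall" "A \<lesssim> S" for A
  proof -
    obtain P where P: "A \<subseteq> P" "P \<subseteq> tX" "G P \<subseteq> Mall" using stage[OF A] by auto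
    then have "A \<in> {A. A \<subseteq> P \<inter> tX \<and> A \<lesssim> S}" using A by auto
    then have "X closure_of A \<subseteq> G P" unfolding G_def by blast
    then show ?thesis using P by blast
  qed
  have R3: "wit B \<in> Mall" if B: "B \<subseteq> Qall Mall" "B \<lesssim> S" "\<not> tX \<subseteq> cov B" for B
  proof -
    have f1: "fst ` B \<subseteq> Mall" using B(1) by (auto simp: Qall_def)
    have f2: "fst ` B \<lesssim> S" using image_lepoll B(2) by (rule lepoll_trans)
    obtain P where P: "fst ` B \<subseteq> P" "P \<subseteq> tX" "G P \<subseteq> Mall" using stage[OF f1 f2] by blast
    have "B \<subseteq> Qall P"
    proof (rule subsetI)
      fix ya assume ya: "ya \<in> B"
      obtain y a where e: "ya = (y,a)" by (cases ya)
      have "(y,a) \<in> Qall Mall" using B(1) ya e by blast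
      then have "y \<in> tX" "a \<in> Ay y" by (auto simp: Qall_def)
      moreover have "fst ya \<in> fst ` B" by (rule imageI[OF ya])
      then have "y \<in> P" using P(1) e by auto
      ultimately show "ya \<in> Qall P" using e by (simp add: Qall_def)
    qed
    then have "wit B \<in> G P" using B unfolding G_def by blast
    then show ?thesis using P by blast
  qed
  have "tX \<subseteq> Mall"
  proof (rule ccontr)
    assume "\<not> tX \<subseteq> Mall"
    then obtain p where p: "p \<in> tX" "p \<notin> Mall" by blast
    have "\<forall>y\<in>Mall. \<exists>a\<in>Ay y. p \<notin> Ob y a"
    proof
      fix y assume y: "y \<in> Mall"
      have yX: "y \<in> tX" using y Mall_sub by blast
      have "p \<notin> theta_closure X {y}" using R1[OF y] p by blast
      moreover have "p \<notin> X closure_of (Ay y)" using R2[of "Ay y"] R1[OF y] Ay_S[OF yX] p by blast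
      ultimately show "\<exists>a\<in>Ay y. p \<notin> Ob y a" using Ob_sep yX p by blast
    qed
    then have "\<forall>y\<in>Mall. \<exists>a. a \<in> Ay y \<and> p \<notin> Ob y a" by blast
    then have "\<exists>ch. \<forall>y\<in>Mall. ch y \<in> Ay y \<and> p \<notin> Ob y (ch y)" by (rule bchoice)
    then obtain ch where ch: "\<And>y. y \<in> Mall \<Longrightarrow> ch y \<in> Ay y \<and> p \<notin> Ob y (ch y)" by blast
    have "\<forall>y\<in>Mall. openin X (Ob y (ch y)) \<and> y \<in> Ob y (ch y)"
      using ch Ob_open Ob_in Mall_sub by blast
    then obtain A where A: "A \<subseteq> Mall" "discrete_subspace X A"
      "Mall \<subseteq> X closure_of A \<union> (\<Union>a\<in>A. Ob a (ch a))"
      using sapirovskii[of Mall X "\<lambda>y. Ob y (ch y)"] Mall_sub by (auto simp: tX_def)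
    have AS: "A \<lesssim> S" using sp A(2) by blast
    define B where "B = (\<lambda>y. (y, ch y)) ` A"
    have fB: "fst ` B = A" by (force simp: B_def)
    have covB: "cov B = X closure_of A \<union> (\<Union>a\<in>A. Ob a (ch a))"
      unfolding cov_def fB by (auto simp: B_def)
    have BQ: "B \<subseteq> Qall Mall" using A(1) ch Mall_sub by (auto simp: B_def Qall_def)
    have BS: "B \<lesssim> S" unfolding B_def using image_lepoll AS lepoll_trans by blast
    have "p \<notin> X closure_of A" using R2[OF A(1) AS] p by blast
    moreover have "p \<notin> (\<Union>a\<in>A. Ob a (ch a))" using ch A(1) by blast
    ultimately have "p \<notin> cov B" using covB by simp
    then have nc: "\<not> tX \<subseteq> cov B" using p by blast
    then have "wit B \<in> Mall" by (rule R3[OF BQ BS])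
    moreover have "wit B \<notin> cov B" using wit[OF nc] by blast
    ultimately show False using A(3) covB by blast
  qed
  then have "tX \<lesssim> T" using Mall_T by (meson lepoll_trans subset_imp_lepoll)
  then show ?thesis by (simp add: tX_def T_def)
qed


theorem theorem3p12:
  fixes X :: "'a topology" and N :: "'b set" and S :: "'c set"
  assumes "infinite (topspace X)"
    and "t1_space X"
    and "is_nu_s X N"
    and "is_spread X S"
  shows "topspace X \<lesssim> Pow (N \<times> Pow S)"
proof -
  obtain K :: "'b set" where K: "is_card_sup (topspace X) (\<lambda>x. theta_closure X {x}) K"
    and NK: "N \<approx> ({()} <+> K)"
    using assms(3) unfolding is_nu_s_def by blast
  obtain K' :: "'c set" where K': "is_card_sup {D. discrete_subspace X D} id K'"
    and SK: "S \<approx> (K' <+> (UNIV :: nat set))"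
    using assms(4) unfolding is_spread_def by blast
  have KN: "K \<lesssim> N"
  proof -
    have "K \<lesssim> {()} <+> K" unfolding lepoll_def
      by (rule exI[of _ Inr]) auto
    also have "{()} <+> K \<approx> N" using NK by (rule eqpoll_sym)
    finally show ?thesis .
  qed
  have th: "theta_closure X {x} \<lesssim> N" if "x \<in> topspace X" for x
  proof -
    have "theta_closure X {x} \<lesssim> K" using K that unfolding is_card_sup_def by blast
    then show ?thesis using KN by (rule lepoll_trans)
  qed
  have Nne: "N \<noteq> {}"
  proof
    assume "N = {}"
    have "({()} <+> K) \<approx> N" by (rule eqpoll_sym[OF NK])
    then have "({()} <+> K) = {}" using \<open>N = {}\<close> by simp
    then show False by auto
  qed
  have K'S: "K' \<lesssim> S"
  proof -
    have "K' \<lesssim> K' <+> (UNIV :: nat set)" unfolding lepoll_def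
      by (rule exI[of _ Inl]) auto
    also have "K' <+> (UNIV :: nat set) \<approx> S" using SK by (rule eqpoll_sym)
    finally show ?thesis .
  qed
  have sp: "D \<lesssim> S" if "discrete_subspace X D" for D
  proof -
    have "D \<lesssim> K'" using K' that unfolding is_card_sup_def by auto
    then show ?thesis using K'S by (rule lepoll_trans)
  qed
  have Sinf: "infinite S"
  proof -
    have "(UNIV :: nat set) \<lesssim> K' <+> (UNIV :: nat set)" unfolding lepoll_def
      by (rule exI[of _ Inr]) auto
    also have "K' <+> (UNIV :: nat set) \<approx> S" using SK by (rule eqpoll_sym)
    finally show ?thesis by (simp add: infinite_le_lepoll)
  qed
  show ?thesis by (rule main_bound[OF th sp Sinf Nne])
qed

end
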